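(* Let $X$ be a metrizable $\sigma$-compact topological space, $Y$ a topological space, and $f\colon X\times Y\to\mathbb R$ a separately continuous function. Suppose $d$ is a metric inducing the topology of $X$ and $\mathcal K$ is a countable family of compact subsets of $X$ with $X=\bigcup_{K\in\mathcal K}K$, and suppose there is $\delta>0$ such that for each $x\in X$ the open ball $B_\delta(x)$ meets only finitely many $K\in\mathcal K$. Then $f$ is the pointwise limit of a sequence of continuous functions $X\times Y\to\mathbb R$ (with $X\times Y$ carrying the product topology). *)

theory Defs
  imports "HOL-Analysis.Analysis"
begin

end

theory Submission
  imports Defs
begin

lemma avg_bound:
  fixes w a :: "'c \<Rightarrow> real"
  assumes "finite S" "S \<noteq> {}" "\<And>c. c \<in> S \<Longrightarrow> w c > 0" "\<And>c. c \<in> S \<Longrightarrow> \<bar>a c - L\<bar> \<le> e"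
  shows "\<bar>(\<Sum>c\<in>S. w c * a c) / (\<Sum>c\<in>S. w c) - L\<bar> \<le> e"
proof -
  have W: "(\<Sum>c\<in>S. w c) > 0" using assms by (intro sum_pos) auto
  have "(\<Sum>c\<in>S. w c * a c) / (\<Sum>c\<in>S. w c) - L = (\<Sum>c\<in>S. w c * (a c - L)) / (\<Sum>c\<in>S. w c)"
    using W by (simp add: field_simps sum_subtractf sum_distrib_left sum_distrib_right)
  also have "\<bar>\<dots>\<bar> = \<bar>\<Sum>c\<in>S. w c * (a c - L)\<bar> / (\<Sum>c\<in>S. w c)" using W by simp
  also have "\<dots> \<le> (\<Sum>c\<in>S. w c * e) / (\<Sum>c\<in>S. w c)"
  proof (rule divide_right_mono)
    have "\<bar>\<Sum>c\<in>S. w c * (a c - L)\<bar> \<le> (\<Sum>c\<in>S. \<bar>w c * (a c - L)\<bar>)" by (rule sum_abs)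
    also have "\<dots> \<le> (\<Sum>c\<in>S. w c * e)"
      using assms by (intro sum_mono) (simp add: abs_mult mult_left_mono less_imp_le)
    finally show "\<bar>\<Sum>c\<in>S. w c * (a c - L)\<bar> \<le> (\<Sum>c\<in>S. w c * e)" .
  qed (use W in simp)
  also have "\<dots> = e" using W by (simp add: sum_distrib_right[symmetric])
  finally show ?thesis .
qed

theorem mainTheorem3:
  fixes X :: "'a topology" and Y :: "'b topology"
    and d :: "'a \<Rightarrow> 'a \<Rightarrow> real"
    and f :: "'a \<times> 'b \<Rightarrow> real"
    and \<K> :: "'a set set" and \<delta> :: real
  assumes metric: "Metric_space (topspace X) d"
    and induces: "Metric_space.mtopology (topspace X) d = X"
    and sep_cont_x: "\<And>y. y \<in> topspace Y \<Longrightarrow> continuous_map X euclideanreal (\<lambda>x. f (x, y))"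
    and sep_cont_y: "\<And>x. x \<in> topspace X \<Longrightarrow> continuous_map Y euclideanreal (\<lambda>y. f (x, y))"
    and K_countable: "countable \<K>"
    and K_compact: "\<And>K. K \<in> \<K> \<Longrightarrow> compactin X K"
    and K_cover: "\<Union>\<K> = topspace X"
    and delta_pos: "\<delta> > 0"
    and loc_fin: "\<And>x. x \<in> topspace X \<Longrightarrow>
                    finite {K \<in> \<K>. Metric_space.mball (topspace X) d x \<delta> \<inter> K \<noteq> {}}"
  shows "\<exists>g :: nat \<Rightarrow> 'a \<times> 'b \<Rightarrow> real.
           (\<forall>n. continuous_map (prod_topology X Y) euclideanreal (g n)) \<and>
           (\<forall>z \<in> topspace (prod_topology X Y). (\<lambda>n. g n z) \<longlonglongrightarrow> f z)"
proof -
  interpret Metric_space "topspace X" d by (rule metric)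
  define M where "M = topspace X"
  have net: "\<exists>F. finite F \<and> F \<subseteq> K \<and> K \<subseteq> (\<Union>c\<in>F. mball c r)" if K: "K \<in> \<K>" and r: "r > 0" for K r
  proof -
    have cK: "compactin X K" using K_compact K by blast
    have KM: "K \<subseteq> topspace X" using cK compactin_subset_topspace by blast
    have om: "openin X (mball c r)" for c using induces openin_mball by metis
    have "\<forall>U \<in> (\<lambda>c. mball c r) ` K. openin X U" using om by blast
    moreover have "K \<subseteq> \<Union>((\<lambda>c. mball c r) ` K)" using KM r by force
    ultimately obtain \<F> where "finite \<F>" "\<F> \<subseteq> (\<lambda>c. mball c r) ` K" "K \<subseteq> \<Union>\<F>"
      using cK unfolding compactin_def by meson
    then obtain F where "F \<subseteq> K" "finite F" "\<F> = (\<lambda>c. mball c r) ` F"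
      by (meson finite_subset_image)
    then show ?thesis using \<open>K \<subseteq> \<Union>\<F>\<close> by blast
  qed
  define F where "F K r = (SOME F. finite F \<and> F \<subseteq> K \<and> K \<subseteq> (\<Union>c\<in>F. mball c r))" for K r
  have F: "finite (F K r) \<and> F K r \<subseteq> K \<and> K \<subseteq> (\<Union>c\<in>F K r. mball c r)"
    if "K \<in> \<K>" "r > 0" for K r
    unfolding F_def by (rule someI_ex[OF net[OF that]])
  define r where "r n = \<delta> / (real n + 2)" for n :: nat
  have r_pos: "r n > 0" for n using delta_pos by (simp add: r_def)
  have r_lt: "r n < \<delta>" for n using delta_pos by (simp add: r_def field_simps) (simp add: add_pos_nonneg)
  define C where "C n = (\<Union>K\<in>\<K>. F K (r n))" for n
  have CM: "C n \<subseteq> topspace X" for n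
    using F r_pos K_cover unfolding C_def by blast
  define \<psi> where "\<psi> n c x = max 0 (r n - d x c)" for n c x
  define N where "N n x = {c \<in> C n. d x c < r n}" for n x
  define g where "g n = (\<lambda>(x,y). (\<Sum>c\<in>N n x. \<psi> n c x * f (c,y)) / (\<Sum>c\<in>N n x. \<psi> n c x))" for n
  have finC: "finite {c \<in> C n. d x c < \<delta>}" if x: "x \<in> topspace X" for n x
  proof -
    have "{c \<in> C n. d x c < \<delta>} \<subseteq> (\<Union>K\<in>{K \<in> \<K>. mball x \<delta> \<inter> K \<noteq> {}}. F K (r n))"
    proof
      fix c assume c: "c \<in> {c \<in> C n. d x c < \<delta>}"
      then obtain K where K: "K \<in> \<K>" "c \<in> F K (r n)" unfolding C_def by blast
      then have "c \<in> K" using F r_pos by blast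
      moreover have "c \<in> mball x \<delta>" using c CM x by auto
      ultimately show "c \<in> (\<Union>K\<in>{K \<in> \<K>. mball x \<delta> \<inter> K \<noteq> {}}. F K (r n))" using K by blast
    qed
    moreover have "finite (\<Union>K\<in>{K \<in> \<K>. mball x \<delta> \<inter> K \<noteq> {}}. F K (r n))"
      using loc_fin[OF x] F r_pos by auto
    ultimately show ?thesis by (rule finite_subset)
  qed
  have finN: "finite (N n x)" if "x \<in> topspace X" for n x
    by (rule finite_subset[OF _ finC[OF that, of n]]) (auto simp: N_def intro: less_trans r_lt)
  have cover: "N n x \<noteq> {}" if x: "x \<in> topspace X" for n x
  proof -
    obtain K where K: "K \<in> \<K>" "x \<in> K" using K_cover x by blast
    then obtain c where "c \<in> F K (r n)" "x \<in> mball c (r n)" using F[OF K(1) r_pos] by blast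
    then show ?thesis using K unfolding N_def C_def by (auto simp: commute)
  qed
  have psi_pos: "\<psi> n c x > 0" if "c \<in> N n x" for n c x
    using that by (simp add: \<psi>_def N_def)
  have mtop: "mtopology_of (metric (topspace X, d)) = X" using induces by simp
  have cdist: "continuous_map X euclideanreal (\<lambda>x. d x c)" if c: "c \<in> topspace X" for c
  proof -
    have "continuous_map X euclidean (\<lambda>x. mdist (metric (topspace X, d)) ((\<lambda>x. x) x) ((\<lambda>x. c) x))"
      by (rule continuous_map_mdist) (use c mtop in auto)
    then show ?thesis by simp
  qed
  have cpsi: "continuous_map (prod_topology X Y) euclideanreal (\<lambda>q. \<psi> n c (fst q))"
    if c: "c \<in> topspace X" for n c
  proof -
    have "continuous_map X euclideanreal (\<lambda>x. \<psi> n c x)"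
      unfolding \<psi>_def by (intro continuous_intros cdist c)
    then have "continuous_map (prod_topology X Y) euclideanreal ((\<lambda>x. \<psi> n c x) \<circ> fst)"
      by (rule continuous_map_compose[OF continuous_map_fst])
    then show ?thesis by (simp add: o_def)
  qed
  have cfy: "continuous_map (prod_topology X Y) euclideanreal (\<lambda>q. f (c, snd q))"
    if c: "c \<in> topspace X" for c
  proof -
    have "continuous_map (prod_topology X Y) euclideanreal ((\<lambda>y. f (c, y)) \<circ> snd)"
      by (rule continuous_map_compose[OF continuous_map_snd sep_cont_y[OF c]])
    then show ?thesis by (simp add: o_def)
  qed
  have contg: "continuous_map (prod_topology X Y) euclideanreal (g n)" for n
    unfolding continuous_map_atin
  proof
    fix p assume p: "p \<in> topspace (prod_topology X Y)"
    obtain x0 y0 where p0: "p = (x0,y0)" "x0 \<in> topspace X" "y0 \<in> topspace Y"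
      using p by (cases p) auto
    define F0 where "F0 = {c \<in> C n. d x0 c < \<delta>}"
    have finF0: "finite F0" using finC p0 by (simp add: F0_def)
    have F0M: "F0 \<subseteq> topspace X" using CM F0_def by auto
    define Num where "Num q = (\<Sum>c\<in>F0. \<psi> n c (fst q) * f (c, snd q))" for q
    define Den :: "'a \<times> 'b \<Rightarrow> real" where "Den q = (\<Sum>c\<in>F0. \<psi> n c (fst q))" for q
    have cNum: "continuous_map (prod_topology X Y) euclideanreal Num"
      unfolding Num_def using finF0 F0M
      by (intro continuous_map_sum continuous_map_real_mult cpsi cfy) auto
    have cDen: "continuous_map (prod_topology X Y) euclideanreal Den"
      unfolding Den_def using finF0 F0M
      by (intro continuous_map_sum cpsi) auto
    have NF0: "N n z \<subseteq> F0" if z: "z \<in> topspace X" "d x0 z < \<delta> - r n" for z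
    proof
      fix c assume c: "c \<in> N n z"
      then have cC: "c \<in> C n" "d z c < r n" by (auto simp: N_def)
      then have "c \<in> topspace X" using CM by blast
      then have "d x0 c \<le> d x0 z + d z c" using triangle p0 z by blast
      then show "c \<in> F0" using cC z by (simp add: F0_def)
    qed
    have sumeq: "(\<Sum>c\<in>N n z. \<psi> n c z * k c) = (\<Sum>c\<in>F0. \<psi> n c z * k c)"
      if z: "z \<in> topspace X" "d x0 z < \<delta> - r n" for z k
    proof (rule sum.mono_neutral_left[OF finF0 NF0[OF z]])
      show "\<forall>i\<in>F0 - N n z. \<psi> n i z * k i = 0"
        by (auto simp: F0_def N_def \<psi>_def)
    qed
    have geq: "g n (z, y) = Num (z, y) / Den (z, y)"
      if z: "z \<in> topspace X" "d x0 z < \<delta> - r n" for z y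
      using sumeq[OF z, of "\<lambda>c. f (c, y)"] sumeq[OF z, of "\<lambda>c. 1"]
      by (simp add: g_def Num_def Den_def)
    have x0in: "d x0 x0 < \<delta> - r n" using p0 r_lt[of n] by simp
    have Denpos: "Den p > 0"
    proof -
      have "Den p = (\<Sum>c\<in>N n x0. \<psi> n c x0)"
        using sumeq[OF p0(2) x0in, of "\<lambda>c. 1"] by (simp add: Den_def p0)
      also have "\<dots> > 0"
        using finN[OF p0(2)] cover[OF p0(2)] psi_pos by (intro sum_pos) auto
      finally show ?thesis .
    qed
    have lim1: "limitin euclideanreal (\<lambda>q. Num q / Den q) (Num p / Den p) (atin (prod_topology X Y) p)"
    proof -
      have "(Num \<longlongrightarrow> Num p) (atin (prod_topology X Y) p)"
        using limitin_continuous_map[OF cNum p refl] by simp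
      moreover have "(Den \<longlongrightarrow> Den p) (atin (prod_topology X Y) p)"
        using limitin_continuous_map[OF cDen p refl] by simp
      ultimately show ?thesis using Denpos by (simp add: tendsto_divide)
    qed
    have ev: "\<forall>\<^sub>F q in atin (prod_topology X Y) p. Num q / Den q = g n q"
      unfolding eventually_atin
    proof (intro disjI2 exI conjI)
      show "openin (prod_topology X Y) (mball x0 (\<delta> - r n) \<times> topspace Y)"
        using induces openin_mball by (metis openin_prod_Times_iff openin_topspace)
      show "p \<in> mball x0 (\<delta> - r n) \<times> topspace Y" using p0 x0in by simp
      show "\<forall>q\<in>mball x0 (\<delta> - r n) \<times> topspace Y - {p}. Num q / Den q = g n q"
        using geq by auto
    qed
    have "g n p = Num p / Den p" using geq[OF p0(2) x0in] p0 by simp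
    then show "limitin euclideanreal (g n) (g n p) (atin (prod_topology X Y) p)"
      using limitin_transform_eventually[OF ev lim1] by simp
  qed
  have conv: "(\<lambda>n. g n p) \<longlonglongrightarrow> f p" if p: "p \<in> topspace (prod_topology X Y)" for p
  proof -
    obtain x y where p0: "p = (x,y)" "x \<in> topspace X" "y \<in> topspace Y"
      using p by (cases p) auto
    show ?thesis
    proof (rule LIMSEQ_I)
      fix e :: real assume e: "e > 0"
      have "limitin euclideanreal (\<lambda>x. f (x,y)) (f (x,y)) (atin X x)"
        using limitin_continuous_map[OF sep_cont_x[OF p0(3)] p0(2) refl] .
      then have "((\<lambda>x. f (x,y)) \<longlongrightarrow> f (x,y)) (atin X x)" by simp
      then have "\<forall>\<^sub>F z in atin X x. dist (f (z,y)) (f (x,y)) < e/2"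
        by (rule tendstoD) (use e in simp)
      then obtain U where U: "openin X U" "x \<in> U" "\<forall>z\<in>U-{x}. dist (f (z,y)) (f (x,y)) < e/2"
        using p0(2) by (auto simp: eventually_atin)
      then obtain \<eta> where \<eta>: "\<eta> > 0" "mball x \<eta> \<subseteq> U"
        using induces openin_mtopology by metis
      obtain n0 :: nat where n0: "\<delta> / \<eta> < real n0" using reals_Archimedean2 by blast
      have rsmall: "r n < \<eta>" if "n \<ge> n0" for n
      proof -
        have "\<delta> < \<eta> * real n0" using n0 \<eta> by (simp add: field_simps)
        also have "\<dots> \<le> \<eta> * (real n + 2)" using that \<eta> by (intro mult_left_mono) auto
        finally show ?thesis using \<eta> by (simp add: r_def field_simps)
      qed
      show "\<exists>no. \<forall>n\<ge>no. norm (g n p - f p) < e"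
      proof (intro exI allI impI)
        fix n assume n: "n \<ge> n0"
        have "\<bar>(\<Sum>c\<in>N n x. \<psi> n c x * f (c,y)) / (\<Sum>c\<in>N n x. \<psi> n c x) - f (x,y)\<bar> \<le> e/2"
        proof (rule avg_bound[OF finN[OF p0(2)] cover[OF p0(2)] psi_pos])
          fix c assume c: "c \<in> N n x"
          then have "c \<in> topspace X" "d x c < r n" using CM by (auto simp: N_def)
          then have "c \<in> U" using \<eta> rsmall[OF n] p0(2) by auto
          then show "\<bar>f (c,y) - f (x,y)\<bar> \<le> e/2"
            using U(3) e by (cases "c = x") (auto simp: dist_real_def intro: less_imp_le)
        qed
        then show "norm (g n p - f p) < e" using e p0 by (simp add: g_def)
      qed
    qed
  qed
  show ?thesis using contg conv by blast
qed

end
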